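(* Both forgetfulness and absent-mindedness can prevent the existence of a Nash equilibrium in behavioural policies. Precisely: (i) there exists a (generalised) MAID in which some agent is forgetful and no agent is absent-minded, and which has no Nash equilibrium in behavioural policies; (ii) there exists a (generalised) MAID in which some agent is absent-minded and no agent is forgetful, and which has no Nash equilibrium in behavioural policies.
   Context: A multi-agent influence diagram (MAID) consists of a finite set of agents $N=\{1,\dots,n\}$ and a directed acyclic graph (DAG) on a finite set of variables $\bm{V}$, partitioned into chance variables $\bm{X}$, decision variables $\bm{D}=\bigcup_{i\in N}\bm{D}^i$ and utility variables $\bm{U}=\bigcup_{i\in N}\bm{U}^i$ (the sets $\bm{D}^i$ are pairwise disjoint, as are the $\bm{U}^i$). Each variable $V$ has a finite domain $\mathrm{dom}(V)$ with at least two elements; $\mathrm{Pa}_V$ denotes its parents in the DAG and $\mathrm{pa}_V$ an instantiation of them. The MAID specifies for every non-decision variable $V$ a conditional probability distribution (CPD) $\Pr(V\mid \mathrm{Pa}_V)$; utility variables have deterministic CPDs, i.e. are real-valued functions of their parents. In a generalised MAID, each agent's decision set $\bm{D}^i$ is partitioned into groups; all decisions in one group have the same domain and their parent sets have the same joint domain, and they share one decision rule. A decision rule for a group $G$ is a CPD $\pi_G(D\mid \mathrm{Pa}_D)$ used at every $D\in G$, each such decision drawing independently from it; it is pure if all its probabilities are in $\{0,1\}$. A (behavioural) policy $\bm{\pi}^i$ of agent $i$ assigns a decision rule to each group of $\bm{D}^i$; a policy profile is $\bm{\pi}=(\bm{\pi}^1,\dots,\bm{\pi}^n)$ and $\bm{\pi}^{-i}$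 denotes the policies of the agents other than $i$. The profile induces the joint distribution $\Pr^{\bm\pi}(\bm v)=\prod_{V\in\bm V\setminus\bm D}\Pr(v\mid \mathrm{pa}_V)\prod_{D\in\bm D}\pi_{G(D)}(d\mid \mathrm{pa}_D)$, where $G(D)$ is the group of $D$, and agent $i$'s expected utility is $EU^i(\bm\pi)=\sum_{U\in\bm U^i}\sum_{u}\Pr^{\bm\pi}(U=u)\,u$. A profile $\bm\pi$ is a Nash equilibrium in behavioural policies if for every agent $i$ and every behavioural policy $\bm\varpi^i$, $EU^i(\bm\pi^{-i},\bm\pi^i)\ge EU^i(\bm\pi^{-i},\bm\varpi^i)$. Agent $i$ has imperfect recall if for every total ordering $D_1\prec\dots\prec D_m$ of $\bm D^i$ there are $j<k$ with $\mathrm{Pa}_{D_j}\cup\{D_j\}\not\subseteq \mathrm{Pa}_{D_k}$; agent $i$ is forgetful if such a pair $D_j,D_k$ have distinct decision rules (lie in different groups); agent $i$ is absent-minded if some group of its decisions contains more than one decision. *)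

theory Defs
  imports Complex_Main "HOL-Library.FuncSet"
begin

text \<open>Variables are natural numbers,
  values are reals (so that utility variables carry their real utility as value).
  The parents of a variable are given as a duplicate-free list; the list order
  identifies parents across the decisions of one group (so that "same joint
  domain of the parent sets" can be expressed).  Decisions are grouped by the
  label grp; a decision rule is attached to each group label.\<close>

record maid =
  agents :: "nat set"
  vars   :: "nat set"
  chance :: "nat set"
  decs   :: "nat set"
  utils  :: "nat set"
  dmn    :: "nat \<Rightarrow> real set"
  par    :: "nat \<Rightarrow> nat list"
  cpd    :: "nat \<Rightarrow> real list \<Rightarrow> real \<Rightarrow> real"
  dagent :: "nat \<Rightarrow> nat"
  uagent :: "nat \<Rightarrow> nat"
  grp    :: "nat \<Rightarrow> nat"

definition is_dist :: "real set \<Rightarrow> (real \<Rightarrow> real) \<Rightarrow> bool" where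
  "is_dist S f \<longleftrightarrow> (\<forall>x\<in>S. 0 \<le> f x) \<and> (\<Sum>x\<in>S. f x) = 1"

definition pinst :: "maid \<Rightarrow> nat \<Rightarrow> real list set" where
  "pinst M v = listset (map (dmn M) (par M v))"

definition edges :: "maid \<Rightarrow> (nat \<times> nat) set" where
  "edges M = {(p, v). v \<in> vars M \<and> p \<in> set (par M v)}"

definition wf_maid :: "maid \<Rightarrow> bool" where
  "wf_maid M \<longleftrightarrow>
     finite (agents M) \<and> finite (vars M) \<and>
     chance M \<union> decs M \<union> utils M = vars M \<and>
     chance M \<inter> decs M = {} \<and> chance M \<inter> utils M = {} \<and> decs M \<inter> utils M = {} \<and>
     (\<forall>v\<in>vars M. finite (dmn M v) \<and> 2 \<le> card (dmn M v)) \<and>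
     (\<forall>v\<in>vars M. distinct (par M v) \<and> set (par M v) \<subseteq> vars M) \<and>
     acyclic (edges M) \<and>
     (\<forall>d\<in>decs M. dagent M d \<in> agents M) \<and>
     (\<forall>u\<in>utils M. uagent M u \<in> agents M) \<and>
     (\<forall>v\<in>vars M - decs M. \<forall>p\<in>pinst M v. is_dist (dmn M v) (cpd M v p)) \<and>
     (\<forall>u\<in>utils M. \<forall>p\<in>pinst M u. \<forall>x. cpd M u p x \<in> {0, 1}) \<and>
     (\<forall>d\<in>decs M. \<forall>d'\<in>decs M. grp M d = grp M d' \<longrightarrow>
        dagent M d = dagent M d' \<and> dmn M d = dmn M d' \<and>
        length (par M d) = length (par M d') \<and>
        (\<forall>k<length (par M d). dmn M (par M d ! k) = dmn M (par M d' ! k)))"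

text \<open>A (behavioural) policy profile assigns to every group label a decision rule.\<close>
type_synonym profile = "nat \<Rightarrow> real list \<Rightarrow> real \<Rightarrow> real"

definition valid_profile :: "maid \<Rightarrow> profile \<Rightarrow> bool" where
  "valid_profile M \<pi> \<longleftrightarrow>
     (\<forall>d\<in>decs M. \<forall>p\<in>pinst M d. is_dist (dmn M d) (\<pi> (grp M d) p))"

definition asgs :: "maid \<Rightarrow> (nat \<Rightarrow> real) set" where
  "asgs M = PiE (vars M) (dmn M)"

definition jprob :: "maid \<Rightarrow> profile \<Rightarrow> (nat \<Rightarrow> real) \<Rightarrow> real" where
  "jprob M \<pi> a = (\<Prod>v\<in>vars M.
      if v \<in> decs M then \<pi> (grp M v) (map a (par M v)) (a v)
      else cpd M v (map a (par M v)) (a v))"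

definition margprob :: "maid \<Rightarrow> profile \<Rightarrow> nat \<Rightarrow> real \<Rightarrow> real" where
  "margprob M \<pi> V x = (\<Sum>a\<in>{a\<in>asgs M. a V = x}. jprob M \<pi> a)"

definition EU :: "maid \<Rightarrow> profile \<Rightarrow> nat \<Rightarrow> real" where
  "EU M \<pi> i = (\<Sum>U\<in>{U\<in>utils M. uagent M U = i}. \<Sum>u\<in>dmn M U. margprob M \<pi> U u * u)"

definition decs_of :: "maid \<Rightarrow> nat \<Rightarrow> nat set" where
  "decs_of M i = {d\<in>decs M. dagent M d = i}"

definition groups_of :: "maid \<Rightarrow> nat \<Rightarrow> nat set" where
  "groups_of M i = grp M ` decs_of M i"

definition nash :: "maid \<Rightarrow> profile \<Rightarrow> bool" where
  "nash M \<pi> \<longleftrightarrow> valid_profile M \<pi> \<and>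
     (\<forall>i\<in>agents M. \<forall>\<pi>'. valid_profile M \<pi>' \<and> (\<forall>g. g \<notin> groups_of M i \<longrightarrow> \<pi>' g = \<pi> g)
        \<longrightarrow> EU M \<pi>' i \<le> EU M \<pi> i)"

definition recall_violation :: "maid \<Rightarrow> nat \<Rightarrow> nat \<Rightarrow> bool" where
  "recall_violation M d d' \<longleftrightarrow> \<not> (set (par M d) \<union> {d} \<subseteq> set (par M d'))"

definition imperfect_recall :: "maid \<Rightarrow> nat \<Rightarrow> bool" where
  "imperfect_recall M i \<longleftrightarrow>
     (\<forall>xs. distinct xs \<and> set xs = decs_of M i \<longrightarrow>
        (\<exists>j k. j < k \<and> k < length xs \<and> recall_violation M (xs ! j) (xs ! k)))"

definition forgetful :: "maid \<Rightarrow> nat \<Rightarrow> bool" where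
  "forgetful M i \<longleftrightarrow>
     (\<forall>xs. distinct xs \<and> set xs = decs_of M i \<longrightarrow>
        (\<exists>j k. j < k \<and> k < length xs \<and> recall_violation M (xs ! j) (xs ! k) \<and>
               grp M (xs ! j) \<noteq> grp M (xs ! k)))"

definition absent_minded :: "maid \<Rightarrow> nat \<Rightarrow> bool" where
  "absent_minded M i \<longleftrightarrow>
     (\<exists>d\<in>decs_of M i. \<exists>d'\<in>decs_of M i. d \<noteq> d' \<and> grp M d = grp M d')"

end

theory Submission
  imports Defs
begin

definition uf :: "nat \<Rightarrow> real list \<Rightarrow> real" where
  "uf v p = (if v = 3 then (if p!0 = p!1 then 2 else 0) + (if p!0 = p!2 then 1 else 0)
             else (if p!0 = p!1 then 0 else 1))"

definition MM :: "nat \<Rightarrow> maid" where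
  "MM k = (| agents = {1,2}, vars = {0,1,2,3,4}, chance = {}, decs = {0,1,2}, utils = {3,4},
     dmn = (\<lambda>v. if v = 3 then {0,1,2,3} else {0,1}),
     par = (\<lambda>v. if v = 3 then [0,1,2] else if v = 4 then [0,2] else []),
     cpd = (\<lambda>v p x. if x = uf v p then 1 else 0),
     dagent = (\<lambda>v. if v = 2 then 2 else 1),
     uagent = (\<lambda>v. if v = 4 then 2 else 1),
     grp = (\<lambda>v. if v = 1 then k else v) |)"

lemma wf_MM: "k \<le> 1 \<Longrightarrow> wf_maid (MM k)"
proof -
  assume k: "k \<le> 1"
  have ac: "acyclic (edges (MM k))"
    by (rule acyclicI_order[where f = "\<lambda>x::nat. 10 - x"])
       (auto simp: edges_def MM_def split: if_splits)
  show ?thesis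
    unfolding wf_maid_def
    using k ac
    by (auto simp: MM_def pinst_def set_Cons_def is_dist_def uf_def)
qed

lemma sum_PiE_insert:
  assumes "x \<notin> S"
  shows "(\<Sum>f\<in>PiE (insert x S) T. g f) = (\<Sum>y\<in>T x. \<Sum>f\<in>PiE S T. g (f(x:=y)))"
proof -
  have "(\<Sum>f\<in>PiE (insert x S) T. g f) = (\<Sum>z\<in>T x \<times> PiE S T. g ((\<lambda>(y, h). h(x := y)) z))"
    unfolding PiE_insert_eq by (subst sum.reindex[OF inj_combinator[OF assms]]) (simp add: comp_def)
  also have "\<dots> = (\<Sum>y\<in>T x. \<Sum>f\<in>PiE S T. g (f(x:=y)))"
    by (simp add: sum.cartesian_product split_def)
  finally show ?thesis .
qed

lemma EU_single:
  assumes "finite (asgs M)" "finite (dmn M U)" "\<forall>a\<in>asgs M. a U \<in> dmn M U"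
  shows "(\<Sum>u\<in>dmn M U. margprob M \<pi> U u * u) = (\<Sum>a\<in>asgs M. a U * jprob M \<pi> a)"
proof -
  have "(\<Sum>a\<in>asgs M. a U * jprob M \<pi> a) = (\<Sum>u\<in>dmn M U. \<Sum>a\<in>{a\<in>asgs M. a U = u}. a U * jprob M \<pi> a)"
    by (rule sum.group[symmetric]) (use assms in auto)
  also have "\<dots> = (\<Sum>u\<in>dmn M U. margprob M \<pi> U u * u)"
    unfolding margprob_def sum_distrib_right by (auto intro!: sum.cong)
  finally show ?thesis by simp
qed

lemma asgs_MM: "asgs (MM k) = PiE {0,1,2,3,4} (dmn (MM k))"
  by (simp add: asgs_def MM_def)

lemma utils1: "{U\<in>utils (MM k). uagent (MM k) U = 1} = {3}"
  by (auto simp: MM_def)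

lemma MM_simps:
  "dmn (MM k) = (\<lambda>v. if v = 3 then {0,1,2,3} else {0,1})"
  "par (MM k) = (\<lambda>v. if v = 3 then [0,1,2] else if v = 4 then [0,2] else [])"
  "cpd (MM k) = (\<lambda>v p x. if x = uf v p then 1 else 0)"
  "vars (MM k) = {0,1,2,3,4}" "decs (MM k) = {0,1,2}" "utils (MM k) = {3,4}"
  "grp (MM k) = (\<lambda>v. if v = 1 then k else v)"
  "agents (MM k) = {1,2}"
  "dagent (MM k) = (\<lambda>v. if v = 2 then 2 else 1)"
  "uagent (MM k) = (\<lambda>v. if v = 4 then 2 else 1)"
  by (simp_all add: MM_def)

lemma sum_PiE5:
  "(\<Sum>a\<in>PiE {0,1,2,3,4::nat} D. F (a 0) (a 1) (a 2) (a 3) (a 4)) =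
   (\<Sum>y0\<in>D 0. \<Sum>y1\<in>D 1. \<Sum>y2\<in>D 2. \<Sum>y3\<in>D 3. \<Sum>y4\<in>D 4. F y0 y1 y2 y3 y4)"
  by (simp add: sum_PiE_insert)

lemma jprob_MM: "jprob (MM k) \<pi> a = \<pi> 0 [] (a 0) * \<pi> k [] (a 1) * \<pi> 2 [] (a 2) *
   ((if a 3 = uf 3 [a 0, a 1, a 2] then 1 else 0) * (if a 4 = uf 4 [a 0, a 2] then 1 else 0))"
  by (simp add: jprob_def MM_simps)

lemma utils2: "{U\<in>utils (MM k). uagent (MM k) U = 2} = {4}"
  by (auto simp: MM_simps)

lemma EU1_sum: "EU (MM k) \<pi> 1 = (\<Sum>y0\<in>{0,1}. \<Sum>y1\<in>{0,1}. \<Sum>y2\<in>{0,1}.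
     \<pi> 0 [] y0 * \<pi> k [] y1 * \<pi> 2 [] y2 * uf 3 [y0,y1,y2])"
proof -
  have "EU (MM k) \<pi> 1 = (\<Sum>u\<in>dmn (MM k) 3. margprob (MM k) \<pi> 3 u * u)"
    unfolding EU_def utils1 by simp
  also have "\<dots> = (\<Sum>a\<in>asgs (MM k). a 3 * jprob (MM k) \<pi> a)"
    by (rule EU_single) (auto simp: asgs_MM MM_simps PiE_iff finite_PiE)
  also have "\<dots> = (\<Sum>a\<in>PiE {0,1,2,3,4::nat} (dmn (MM k)). (\<lambda>y0 y1 y2 y3 y4. y3 * (\<pi> 0 [] y0 * \<pi> k [] y1 * \<pi> 2 [] y2 *
   ((if y3 = uf 3 [y0, y1, y2] then 1 else 0) * (if y4 = uf 4 [y0, y2] then 1 else 0)))) (a 0) (a 1) (a 2) (a 3) (a 4))"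
    by (simp add: asgs_MM jprob_MM)
  also have "\<dots> = (\<Sum>y0\<in>{0,1}. \<Sum>y1\<in>{0,1}. \<Sum>y2\<in>{0,1}. \<Sum>y3\<in>{0,1,2,3}. \<Sum>y4\<in>{0,1}. y3 * (\<pi> 0 [] y0 * \<pi> k [] y1 * \<pi> 2 [] y2 *
   ((if y3 = uf 3 [y0, y1, y2] then 1 else 0) * (if y4 = uf 4 [y0, y2] then 1 else 0))))"
    by (subst sum_PiE5) (simp add: MM_simps)
  also have "\<dots> = (\<Sum>y0\<in>{0,1}. \<Sum>y1\<in>{0,1}. \<Sum>y2\<in>{0,1}.
     \<pi> 0 [] y0 * \<pi> k [] y1 * \<pi> 2 [] y2 * uf 3 [y0,y1,y2])"
    by (intro sum.cong refl) (auto simp: uf_def)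
  finally show ?thesis .
qed

lemma EU2_sum: "EU (MM k) \<pi> 2 = (\<Sum>y0\<in>{0,1}. \<Sum>y1\<in>{0,1}. \<Sum>y2\<in>{0,1}.
     \<pi> 0 [] y0 * \<pi> k [] y1 * \<pi> 2 [] y2 * uf 4 [y0,y2])"
proof -
  have "EU (MM k) \<pi> 2 = (\<Sum>u\<in>dmn (MM k) 4. margprob (MM k) \<pi> 4 u * u)"
    unfolding EU_def utils2 by simp
  also have "\<dots> = (\<Sum>a\<in>asgs (MM k). a 4 * jprob (MM k) \<pi> a)"
    by (rule EU_single) (auto simp: asgs_MM MM_simps PiE_iff finite_PiE)
  also have "\<dots> = (\<Sum>a\<in>PiE {0,1,2,3,4::nat} (dmn (MM k)). (\<lambda>y0 y1 y2 y3 y4. y4 * (\<pi> 0 [] y0 * \<pi> k [] y1 * \<pi> 2 [] y2 *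
   ((if y3 = uf 3 [y0, y1, y2] then 1 else 0) * (if y4 = uf 4 [y0, y2] then 1 else 0)))) (a 0) (a 1) (a 2) (a 3) (a 4))"
    by (simp add: asgs_MM jprob_MM)
  also have "\<dots> = (\<Sum>y0\<in>{0,1}. \<Sum>y1\<in>{0,1}. \<Sum>y2\<in>{0,1}. \<Sum>y3\<in>{0,1,2,3}. \<Sum>y4\<in>{0,1}. y4 * (\<pi> 0 [] y0 * \<pi> k [] y1 * \<pi> 2 [] y2 *
   ((if y3 = uf 3 [y0, y1, y2] then 1 else 0) * (if y4 = uf 4 [y0, y2] then 1 else 0))))"
    by (subst sum_PiE5) (simp add: MM_simps)
  also have "\<dots> = (\<Sum>y0\<in>{0,1}. \<Sum>y1\<in>{0,1}. \<Sum>y2\<in>{0,1}.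
     \<pi> 0 [] y0 * \<pi> k [] y1 * \<pi> 2 [] y2 * uf 4 [y0,y2])"
    by (intro sum.cong refl) (auto simp: uf_def)
  finally show ?thesis .
qed

lemma EU1_val: "EU (MM k) \<pi> 1 = 2*(\<pi> 0 [] 1 * \<pi> k [] 1 + \<pi> 0 [] 0 * \<pi> k [] 0) * (\<pi> 2 [] 0 + \<pi> 2 [] 1)
   + (\<pi> 0 [] 1 * \<pi> 2 [] 1 + \<pi> 0 [] 0 * \<pi> 2 [] 0) * (\<pi> k [] 0 + \<pi> k [] 1)"
  unfolding EU1_sum by (simp add: uf_def algebra_simps)

lemma EU2_val: "EU (MM k) \<pi> 2 = (\<pi> 0 [] 1 * \<pi> 2 [] 0 + \<pi> 0 [] 0 * \<pi> 2 [] 1) * (\<pi> k [] 0 + \<pi> k [] 1)"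
  unfolding EU2_sum by (simp add: uf_def algebra_simps)

lemma arith_core:
  fixes p q r :: real
  assumes "0\<le>p" "p\<le>1" "0\<le>q" "q\<le>1" "0\<le>r" "r\<le>1"
    "E1 = 2*(p*r+(1-p)*(1-r)) + (p*q+(1-p)*(1-q))" "E2 = p*(1-q)+(1-p)*q"
    "E1 \<ge> 2+q" "E1 \<ge> 3-q" "E2 \<ge> p" "E2 \<ge> 1-p"
  shows False
proof -
  have c1: "p*r \<le> r" using mult_right_mono[OF assms(2) assms(5)] by simp
  have c2: "(1-p)*(1-r) \<le> 1-r" using mult_right_mono[of "1-p" 1 "1-r"] assms(1,6) by simp
  have a: "q*(1-2*p) \<ge> 0" using assms(8,11) by (simp add: algebra_simps)
  have b: "(1-q)*(2*p-1) \<ge> 0" using assms(8,12) by (simp add: algebra_simps)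
  have e1: "E1 = 2*(p*r+(1-p)*(1-r)) + (1 - p - q + 2*p*q)" using assms(7) by (simp add: algebra_simps)
  consider "p > 1/2" | "p < 1/2" | "p = 1/2" by linarith
  then show False
  proof cases
    case 1
    then have "1-2*p < 0" by simp
    then have "q \<le> 0" using a by (simp add: zero_le_mult_iff)
    then have "q = 0" using assms(3) by simp
    then show False using e1 assms(10) c1 c2 1 by simp
  next
    case 2
    then have "2*p-1 < 0" by simp
    then have "1-q \<le> 0" using b by (simp add: zero_le_mult_iff)
    then have "q = 1" using assms(4) by simp
    then show False using e1 assms(9) c1 c2 2 by simp
  next
    case 3
    have "E1 = 3/2" using e1 3 by (simp add: field_simps)
    then show False using assms(3,9) by simp
  qed
qed
lemma is_dist01: "is_dist {0,1} f \<longleftrightarrow> 0 \<le> f 0 \<and> 0 \<le> f 1 \<and> f 0 + f 1 = 1"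
  by (simp add: is_dist_def)

lemma valid_MM: "valid_profile (MM k) \<sigma> \<longleftrightarrow>
   is_dist {0,1} (\<sigma> 0 []) \<and> is_dist {0,1} (\<sigma> k []) \<and> is_dist {0,1} (\<sigma> 2 [])"
  by (simp add: valid_profile_def pinst_def MM_simps)

lemma groups1: "k \<le> 1 \<Longrightarrow> groups_of (MM k) 1 = {0,k}"
  by (auto simp: groups_of_def decs_of_def MM_simps)

lemma groups1': "k \<le> 1 \<Longrightarrow> groups_of (MM k) (Suc 0) = {0,k}"
  using groups1 by simp

lemma groups2: "groups_of (MM k) 2 = {2}"
  by (auto simp: groups_of_def decs_of_def MM_simps)

lemma no_nash:
  assumes k: "k \<le> 1"
  shows "\<not> nash (MM k) \<pi>"
proof
  assume N: "nash (MM k) \<pi>"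
  define d1 :: "real list \<Rightarrow> real \<Rightarrow> real" where "d1 = (\<lambda>_ x. if x = 1 then 1 else 0)"
  define d0 :: "real list \<Rightarrow> real \<Rightarrow> real" where "d0 = (\<lambda>_ x. if x = 0 then 1 else 0)"
  have k2: "k \<noteq> 2" "2 \<noteq> k" using k by auto
  have V: "valid_profile (MM k) \<pi>" using N by (simp add: nash_def)
  then have v0: "0 \<le> \<pi> 0 [] 1" "\<pi> 0 [] 0 = 1 - \<pi> 0 [] 1" "\<pi> 0 [] 1 \<le> 1"
    and vk: "0 \<le> \<pi> k [] 1" "\<pi> k [] 0 = 1 - \<pi> k [] 1" "\<pi> k [] 1 \<le> 1"
    and v2: "0 \<le> \<pi> 2 [] 1" "\<pi> 2 [] 0 = 1 - \<pi> 2 [] 1" "\<pi> 2 [] 1 \<le> 1"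
    by (auto simp: valid_MM is_dist01)
  have dd: "is_dist {0,1} (d1 [])" "is_dist {0,1} (d0 [])" by (simp_all add: is_dist01 d1_def d0_def)
  have NE: "EU (MM k) \<pi>' i \<le> EU (MM k) \<pi> i"
    if "i \<in> {1,2}" "valid_profile (MM k) \<pi>'" "\<forall>g. g \<notin> groups_of (MM k) i \<longrightarrow> \<pi>' g = \<pi> g" for i \<pi>'
    using N that by (auto simp: nash_def MM_simps)
  define p where "p = \<pi> 0 [] 1"
  define q where "q = \<pi> 2 [] 1"
  define r where "r = \<pi> k [] 1"
  have E1: "EU (MM k) \<pi> 1 = 2*(p*r+(1-p)*(1-r)) + (p*q+(1-p)*(1-q))"
    unfolding EU1_val p_def q_def r_def using v0 vk v2 by simp
  have E2: "EU (MM k) \<pi> 2 = p*(1-q)+(1-p)*q"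
    unfolding EU2_val p_def q_def r_def using v0 vk v2 by simp
  have A1: "EU (MM k) (\<pi>(0 := d1, k := d1)) 1 \<le> EU (MM k) \<pi> 1"
    by (rule NE) (use k2 V dd in \<open>auto simp: valid_MM groups1'[OF k]\<close>)
  have A0: "EU (MM k) (\<pi>(0 := d0, k := d0)) 1 \<le> EU (MM k) \<pi> 1"
    by (rule NE) (use k2 V dd in \<open>auto simp: valid_MM groups1'[OF k]\<close>)
  have B1: "EU (MM k) (\<pi>(2 := d1)) 2 \<le> EU (MM k) \<pi> 2"
    by (rule NE) (use k2 V dd in \<open>auto simp: valid_MM groups2\<close>)
  have B0: "EU (MM k) (\<pi>(2 := d0)) 2 \<le> EU (MM k) \<pi> 2"
    by (rule NE) (use k2 V dd in \<open>auto simp: valid_MM groups2\<close>)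
  have "EU (MM k) (\<pi>(0 := d1, k := d1)) 1 = 2 + q"
    unfolding EU1_val q_def using k2 v2 by (simp add: d1_def)
  moreover have "EU (MM k) (\<pi>(0 := d0, k := d0)) 1 = 3 - q"
    unfolding EU1_val q_def using k2 v2 by (simp add: d0_def)
  moreover have "EU (MM k) (\<pi>(2 := d1)) 2 = 1 - p"
    unfolding EU2_val p_def using k2 v0 vk by (simp add: d1_def)
  moreover have "EU (MM k) (\<pi>(2 := d0)) 2 = p"
    unfolding EU2_val p_def using k2 v0 vk by (simp add: d0_def)
  ultimately show False
    using arith_core[OF _ _ _ _ _ _ E1 E2] A1 A0 B1 B0 v0 vk v2 unfolding p_def q_def r_def
    by linarith
qed

lemma decs1: "decs_of (MM k) (Suc 0) = {0,1}"
  by (auto simp: decs_of_def MM_simps)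

lemma decs2: "decs_of (MM k) 2 = {2}"
  by (auto simp: decs_of_def MM_simps)

lemma two_lists:
  assumes "distinct xs" "set xs = {a,b}" "a \<noteq> b"
  shows "xs = [a,b] \<or> xs = [b,a]"
proof -
  have "length xs = 2" using distinct_card[OF assms(1)] assms(2,3) by simp
  then obtain x y where "xs = [x,y]"
    by (metis One_nat_def Suc_1 length_0_conv length_Suc_conv)
  then show ?thesis using assms by auto
qed

lemma forgetful_MM1: "forgetful (MM 1) 1"
  unfolding forgetful_def
proof (intro allI impI)
  fix xs :: "nat list" assume "distinct xs \<and> set xs = decs_of (MM 1) 1"
  then have "xs = [0,1] \<or> xs = [1,0]" using two_lists[of xs 0 1] decs1 by simp
  then show "\<exists>j k. j < k \<and> k < length xs \<and> recall_violation (MM 1) (xs ! j) (xs ! k) \<and>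
               grp (MM 1) (xs ! j) \<noteq> grp (MM 1) (xs ! k)"
    by (intro exI[of _ 0] exI[of _ 1]) (auto simp: recall_violation_def MM_simps)
qed

lemma not_forgetful_MM0_1: "\<not> forgetful (MM 0) 1"
  unfolding forgetful_def One_nat_def decs1
  apply (simp only: not_all)
  apply (rule exI[of _ "[0,1]"])
  apply (auto simp: MM_simps less_Suc_eq)
  done

lemma not_forgetful_2: "\<not> forgetful (MM k) 2"
  unfolding forgetful_def decs2
  apply (simp only: not_all)
  apply (rule exI[of _ "[2]"])
  apply auto
  done

lemma absent_MM0: "absent_minded (MM 0) 1"
  unfolding absent_minded_def One_nat_def decs1 by (auto simp: MM_simps)

lemma not_absent_MM1: "i \<in> {1,2} \<Longrightarrow> \<not> absent_minded (MM 1) i"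
  by (auto simp: absent_minded_def decs1 decs2 MM_simps)

theorem proposition1:
  shows "(\<exists>M. wf_maid M \<and> (\<exists>i\<in>agents M. forgetful M i) \<and>
              (\<forall>i\<in>agents M. \<not> absent_minded M i) \<and> \<not> (\<exists>\<pi>. nash M \<pi>))
       \<and> (\<exists>M. wf_maid M \<and> (\<exists>i\<in>agents M. absent_minded M i) \<and>
              (\<forall>i\<in>agents M. \<not> forgetful M i) \<and> \<not> (\<exists>\<pi>. nash M \<pi>))"
proof (intro conjI)
  show "\<exists>M. wf_maid M \<and> (\<exists>i\<in>agents M. forgetful M i) \<and>
              (\<forall>i\<in>agents M. \<not> absent_minded M i) \<and> \<not> (\<exists>\<pi>. nash M \<pi>)"
  proof (intro exI[of _ "MM 1"] conjI)
    show "wf_maid (MM 1)" by (rule wf_MM) simp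
    show "\<exists>i\<in>agents (MM 1). forgetful (MM 1) i"
      using forgetful_MM1 by (auto simp: MM_simps)
    show "\<forall>i\<in>agents (MM 1). \<not> absent_minded (MM 1) i"
      using not_absent_MM1 by (simp add: MM_simps)
    show "\<not> (\<exists>\<pi>. nash (MM 1) \<pi>)" using no_nash[of 1] by simp
  qed
  show "\<exists>M. wf_maid M \<and> (\<exists>i\<in>agents M. absent_minded M i) \<and>
              (\<forall>i\<in>agents M. \<not> forgetful M i) \<and> \<not> (\<exists>\<pi>. nash M \<pi>)"
  proof (intro exI[of _ "MM 0"] conjI)
    show "wf_maid (MM 0)" by (rule wf_MM) simp
    show "\<exists>i\<in>agents (MM 0). absent_minded (MM 0) i"
      using absent_MM0 by (auto simp: MM_simps)
    show "\<forall>i\<in>agents (MM 0). \<not> forgetful (MM 0) i"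
      using not_forgetful_MM0_1 not_forgetful_2 by (simp add: MM_simps)
    show "\<not> (\<exists>\<pi>. nash (MM 0) \<pi>)" using no_nash[of 0] by simp
  qed
qed

end
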